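(* Let $\mathbf x:I\subset\mathbb R_*\to\mathbb R_*^3$ be a multiplicative naturally parametrized curve with multiplicative curvature $\kappa>0_*$ and torsion $\tau$ on $I$. Then $\mathbf x$ is a multiplicative slant helix if and only if the function $$\sigma(s)=\Big[\kappa^{2_*}(s)/_*\big(\kappa^{2_*}(s)+_*\tau^{2_*}(s)\big)^{\frac32_*}\Big]\cdot_*\big(\tau(s)/_*\kappa(s)\big)^*$$ is constant on $I$. (Explicitly, $\log\sigma=\dfrac{(\log\kappa)^2}{((\log\kappa)^2+(\log\tau)^2)^{3/2}}\log\big((\tau/_*\kappa)^*\big)$.)
   Context: Multiplicative arithmetic: $\mathbb R_*=(0,\infty)$ with $a+_*b=ab$, $a-_*b=a/b$, $a\cdot_*b=e^{\log a\log b}$, $a/_*b=e^{\log a/\log b}$ ($b\neq1$); $0_*=1$, $1_*=e$, $-_*a=1/a$; $a>0_*$ means $a>1$; powers $a^{r_*}=e^{(\log a)^r}$. On $\mathbb R_*^3$, with $\log\mathbf u=(\log u_i)_i$: $\mathbf u+_*\mathbf v=(u_iv_i)_i$, $k\cdot_*\mathbf u=(e^{\log k\log u_i})_i$, $\langle\mathbf u,\mathbf v\rangle_*=e^{\langle\log\mathbf u,\log\mathbf v\rangle}$, $\|\mathbf u\|_*=e^{\|\log\mathbf u\|}$, $\mathbf u\times_*\mathbf v=\exp(\log\mathbf u\times\log\mathbf v)$. Multiplicative derivative: $g^*(s)=e^{s g'(s)/g(s)}$, componentwise, iterated. $\mathbf x$ is naturally parametrized if $\|\mathbf x^*\|_*=1_*$.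 Multiplicative Frenet apparatus: $\mathbf t=\mathbf x^*$, $\kappa=\|\mathbf x^{**}\|_*$, $\mathbf n=\mathbf x^{**}/_*\kappa$, $\mathbf b=\mathbf t\times_*\mathbf n$, $\tau=\langle\mathbf n^*,\mathbf b\rangle_*$; Frenet formulas $\mathbf t^*=\kappa\cdot_*\mathbf n$, $\mathbf n^*=-_*\kappa\cdot_*\mathbf t+_*\tau\cdot_*\mathbf b$, $\mathbf b^*=-_*\tau\cdot_*\mathbf n$. A curve $\mathbf x$ with $\kappa\ne0_*$ is a multiplicative slant helix if there is a constant multiplicative unit vector $\mathbf v$ ($\|\mathbf v\|_*=1_*$) such that the multiplicative angle between $\mathbf n(s)$ and $\mathbf v$ is constant, i.e. $\langle\mathbf n(s),\mathbf v\rangle_*$ is constant on $I$. *)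

theory Defs
  imports "HOL-Analysis.Analysis"
begin

definition mzero :: real where "mzero = 1"
definition mone :: real where "mone = exp 1"
definition madd :: "real \<Rightarrow> real \<Rightarrow> real" where "madd a b = a * b"
definition mmul :: "real \<Rightarrow> real \<Rightarrow> real" where "mmul a b = exp (ln a * ln b)"
definition mdiv :: "real \<Rightarrow> real \<Rightarrow> real" where "mdiv a b = exp (ln a / ln b)"
definition mpow :: "real \<Rightarrow> nat \<Rightarrow> real" where "mpow a n = exp ((ln a) ^ n)"
definition mpowr :: "real \<Rightarrow> real \<Rightarrow> real" where "mpowr a r = exp ((ln a) powr r)"

definition vlog :: "real^3 \<Rightarrow> real^3" where "vlog u = (\<chi> i. ln (u $ i))"
definition vexp :: "real^3 \<Rightarrow> real^3" where "vexp v = (\<chi> i. exp (v $ i))"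
definition mvadd :: "real^3 \<Rightarrow> real^3 \<Rightarrow> real^3" where "mvadd u v = (\<chi> i. u $ i * v $ i)"
definition mscale :: "real \<Rightarrow> real^3 \<Rightarrow> real^3" where "mscale k u = (\<chi> i. mmul k (u $ i))"
definition mvdiv :: "real^3 \<Rightarrow> real \<Rightarrow> real^3" where "mvdiv u k = (\<chi> i. mdiv (u $ i) k)"
definition minner :: "real^3 \<Rightarrow> real^3 \<Rightarrow> real" where "minner u v = exp (inner (vlog u) (vlog v))"
definition mnorm :: "real^3 \<Rightarrow> real" where "mnorm u = exp (norm (vlog u))"
definition mcross :: "real^3 \<Rightarrow> real^3 \<Rightarrow> real^3" where "mcross u v = vexp (cross3 (vlog u) (vlog v))"

definition mderiv :: "(real \<Rightarrow> real) \<Rightarrow> real \<Rightarrow> real" where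
  "mderiv g s = exp (s * deriv g s / g s)"

definition mvderiv :: "(real \<Rightarrow> real^3) \<Rightarrow> real \<Rightarrow> real^3" where
  "mvderiv x s = (\<chi> i. mderiv (\<lambda>r. x r $ i) s)"

definition msmooth_on :: "real set \<Rightarrow> (real \<Rightarrow> real^3) \<Rightarrow> bool" where
  "msmooth_on I x \<longleftrightarrow> (\<forall>i n. \<forall>s\<in>I. ((mderiv ^^ n) (\<lambda>r. x r $ i)) differentiable (at s))"

definition mtangent :: "(real \<Rightarrow> real^3) \<Rightarrow> real \<Rightarrow> real^3" where
  "mtangent x s = mvderiv x s"
definition mcurvature :: "(real \<Rightarrow> real^3) \<Rightarrow> real \<Rightarrow> real" where
  "mcurvature x s = mnorm (mvderiv (mvderiv x) s)"
definition mnormal :: "(real \<Rightarrow> real^3) \<Rightarrow> real \<Rightarrow> real^3" where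
  "mnormal x s = mvdiv (mvderiv (mvderiv x) s) (mcurvature x s)"
definition mbinormal :: "(real \<Rightarrow> real^3) \<Rightarrow> real \<Rightarrow> real^3" where
  "mbinormal x s = mcross (mtangent x s) (mnormal x s)"
definition mtorsion :: "(real \<Rightarrow> real^3) \<Rightarrow> real \<Rightarrow> real" where
  "mtorsion x s = minner (mvderiv (mnormal x) s) (mbinormal x s)"

definition mnat_param :: "real set \<Rightarrow> (real \<Rightarrow> real^3) \<Rightarrow> bool" where
  "mnat_param I x \<longleftrightarrow> (\<forall>s\<in>I. mnorm (mvderiv x s) = mone)"

definition mslant_helix :: "real set \<Rightarrow> (real \<Rightarrow> real^3) \<Rightarrow> bool" where
  "mslant_helix I x \<longleftrightarrow> (\<forall>s\<in>I. mcurvature x s \<noteq> mzero) \<and>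
     (\<exists>v c. mnorm v = mone \<and> (\<forall>s\<in>I. minner (mnormal x s) v = c))"

definition msigma :: "(real \<Rightarrow> real^3) \<Rightarrow> real \<Rightarrow> real" where
  "msigma x s = mmul
     (mdiv (mpow (mcurvature x s) 2)
           (mpowr (madd (mpow (mcurvature x s) 2) (mpow (mtorsion x s) 2)) (3/2)))
     (mderiv (\<lambda>r. mdiv (mtorsion x r) (mcurvature x r)) s)"

end

theory Submission
  imports Defs
begin


lemma vec3_vd:
  fixes f :: "real \<Rightarrow> real^3"
  assumes "\<And>i. ((\<lambda>r. f r $ i) has_real_derivative f' $ i) (at s)"
  shows "(f has_vector_derivative f') (at s)"
proof -
  have e: "f = (\<lambda>r. (f r $ 1) *\<^sub>R axis 1 1 + (f r $ 2) *\<^sub>R axis 2 1 + (f r $ 3) *\<^sub>R axis 3 1)"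
    by (auto simp: vec_eq_iff forall_3 axis_def)
  have e2: "f' = (f' $ 1) *\<^sub>R axis 1 1 + (f' $ 2) *\<^sub>R axis 2 1 + (f' $ 3) *\<^sub>R axis 3 1"
    by (auto simp: vec_eq_iff forall_3 axis_def)
  show ?thesis
    apply (subst e, subst e2)
    by (auto intro!: derivative_eq_intros assms)
qed

lemma vd_comp:
  fixes f :: "real \<Rightarrow> real^3"
  assumes "(f has_vector_derivative f') (at s)"
  shows "((\<lambda>r. f r $ i) has_real_derivative f' $ i) (at s)"
  using bounded_linear.has_vector_derivative[OF bounded_linear_vec_nth assms, of i]
  by (simp add: has_real_derivative_iff_has_vector_derivative)

lemma bb_cross: "bounded_bilinear (cross3 :: real^3 \<Rightarrow> real^3 \<Rightarrow> real^3)"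
  using bilinear_conv_bounded_bilinear bilinear_cross by blast

lemma vd_cross:
  fixes f g :: "real \<Rightarrow> real^3"
  assumes "(f has_vector_derivative f') (at s)" "(g has_vector_derivative g') (at s)"
  shows "((\<lambda>r. cross3 (f r) (g r)) has_vector_derivative (cross3 (f s) g' + cross3 f' (g s))) (at s)"
  using bounded_bilinear.has_vector_derivative[OF bb_cross assms] .

lemma vd_inner:
  fixes f g :: "real \<Rightarrow> real^3"
  assumes "(f has_vector_derivative f') (at s)" "(g has_vector_derivative g') (at s)"
  shows "((\<lambda>r. inner (f r) (g r)) has_real_derivative (inner (f s) g' + inner f' (g s))) (at s)"
  using bounded_bilinear.has_vector_derivative[OF bounded_bilinear_inner assms]
  by (simp add: has_real_derivative_iff_has_vector_derivative)

lemma deriv_const_zero: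
  assumes "open I" "s \<in> I" "\<And>r. r \<in> I \<Longrightarrow> g r = c" "(g has_real_derivative d) (at s)"
  shows "d = 0"
proof -
  have "((\<lambda>r. c) has_real_derivative d) (at s)"
    using has_field_derivative_transform_within_open[OF assms(4) assms(1,2)] assms(3) by auto
  then show ?thesis using DERIV_unique DERIV_const by blast
qed

lemma cross_cross3: "cross3 (a::real^3) (cross3 b c) = inner a c *\<^sub>R b - inner a b *\<^sub>R c"
  by (simp add: cross3_simps forall_3)

lemma cross_cross3': "cross3 (cross3 (a::real^3) b) c = inner a c *\<^sub>R b - inner b c *\<^sub>R a"
  by (simp add: cross3_simps forall_3)

lemma onb_expand:
  fixes t n w :: "real^3"
  assumes "inner t t = 1" "inner n n = 1" "inner t n = 0"
  shows "w = inner w t *\<^sub>R t + inner w n *\<^sub>R n + inner w (cross3 t n) *\<^sub>R cross3 t n"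
proof -
  define b where "b = cross3 t n"
  define u where "u = w - inner w t *\<^sub>R t - inner w n *\<^sub>R n"
  have ut: "inner t u = 0" "inner n u = 0" using assms
    by (auto simp: u_def inner_diff_right inner_commute)
  have "cross3 b u = 0" unfolding b_def cross_cross3' using ut by simp
  then have "cross3 b (cross3 b u) = 0" by simp
  then have "inner b u *\<^sub>R b = inner b b *\<^sub>R u" unfolding cross_cross3 by simp
  moreover have "inner b b = 1"
    using norm_cross_dot[of t n] assms unfolding b_def
    by (simp add: power2_norm_eq_inner norm_eq_sqrt_inner)
  moreover have "inner b u = inner w b"
    by (simp add: u_def b_def inner_diff_right dot_cross_self inner_commute)
  ultimately have "u = inner w b *\<^sub>R b" by simp
  then show ?thesis unfolding u_def b_def by (simp add: algebra_simps)
qed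



lemma sq_const:
  fixes g :: "real \<Rightarrow> real"
  assumes "continuous_on I g" "is_interval I" "\<And>s. s \<in> I \<Longrightarrow> g s ^ 2 = r" "r > 0"
  shows "\<exists>c. \<forall>s\<in>I. g s = c"
proof (cases "I = {}")
  case True then show ?thesis by auto
next
  case False
  then obtain s0 where s0: "s0 \<in> I" by auto
  have conn: "connected (g ` I)"
    using connected_continuous_image assms(1,2) is_interval_connected_1 by blast
  have "g s = g s0" if s: "s \<in> I" for s
  proof (rule ccontr)
    assume ne: "g s \<noteq> g s0"
    have "g s ^ 2 = g s0 ^ 2" using assms(3) s s0 by simp
    then have m: "g s = - g s0" using ne by (simp add: power2_eq_iff)
    have gi: "g s \<in> g ` I" "g s0 \<in> g ` I" using s s0 by auto
    have "0 \<in> g ` I"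
    proof (cases "g s \<le> 0")
      case True
      then show ?thesis using connectedD_interval[OF conn gi(1) gi(2), of 0] m by auto
    next
      case False
      then show ?thesis using connectedD_interval[OF conn gi(2) gi(1), of 0] m by auto
    qed
    then obtain z where "z \<in> I" "g z = 0" by auto
    then show False using assms(3,4) by force
  qed
  then show ?thesis by blast
qed

lemma vlog_vexp0: "vlog (vexp v) = v" by (simp add: vlog_def vexp_def)

lemma diff_DERIV: "(g::real\<Rightarrow>real) differentiable (at s) \<Longrightarrow> (g has_real_derivative deriv g s) (at s)"
  using real_differentiable_def DERIV_imp_deriv by metis

context
  fixes x :: "real \<Rightarrow> real^3" and I :: "real set"
  assumes Iint: "is_interval I" and Iopen: "open I" and Ipos: "I \<subseteq> {0<..}"
    and xpos: "\<forall>s\<in>I. \<forall>i. x s $ i > 0"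
    and sm: "msmooth_on I x"
    and np: "mnat_param I x"
    and kp: "\<forall>s\<in>I. mcurvature x s > mzero"
begin

definition Lf :: "nat \<Rightarrow> 3 \<Rightarrow> real \<Rightarrow> real" where
  "Lf n i r = ln ((mderiv ^^ n) (\<lambda>q. x q $ i) r)"
definition Y :: "nat \<Rightarrow> real \<Rightarrow> real^3" where "Y n r = (\<chi> i. Lf n i r)"

lemma spos: "s \<in> I \<Longrightarrow> s > 0" using Ipos by auto

lemma Lf_deriv:
  assumes s: "s \<in> I"
  shows "(Lf n i has_real_derivative Lf (Suc n) i s / s) (at s)"
proof -
  define g where "g = (mderiv ^^ n) (\<lambda>q. x q $ i)"
  have dg: "g differentiable (at s)" using sm s unfolding msmooth_on_def g_def by blast
  have gp: "g s > 0"
  proof (cases n)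
    case 0 then show ?thesis using xpos s by (simp add: g_def)
  next
    case (Suc m) then show ?thesis by (simp add: g_def mderiv_def)
  qed
  have L1: "Lf (Suc n) i s = s * deriv g s / g s"
    by (simp add: Lf_def g_def mderiv_def)
  have "((\<lambda>r. ln (g r)) has_real_derivative deriv g s / g s) (at s)"
    using diff_DERIV[OF dg] gp by (auto intro!: derivative_eq_intros)
  moreover have "Lf n i = (\<lambda>r. ln (g r))" by (simp add: Lf_def g_def fun_eq_iff)
  moreover have "deriv g s / g s = Lf (Suc n) i s / s" using spos[OF s] L1 by simp
  ultimately show ?thesis by simp
qed

lemma Y_deriv:
  assumes s: "s \<in> I"
  shows "(Y n has_vector_derivative (1/s) *\<^sub>R Y (Suc n) s) (at s)"
  apply (rule vec3_vd)
  using Lf_deriv[OF s] by (simp add: Y_def)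

lemma Y_d1: "s \<in> I \<Longrightarrow> (Y 1 has_vector_derivative (1/s) *\<^sub>R Y 2 s) (at s)"
  using Y_deriv[of s 1] by (simp add: numeral_2_eq_2)
lemma Y_d2: "s \<in> I \<Longrightarrow> (Y 2 has_vector_derivative (1/s) *\<^sub>R Y 3 s) (at s)"
  using Y_deriv[of s 2] by (simp add: numeral_3_eq_3 numeral_2_eq_2)
lemma Y_d3: "s \<in> I \<Longrightarrow> (Y 3 has_vector_derivative (1/s) *\<^sub>R Y 4 s) (at s)"
  using Y_deriv[of s 3] by (simp add: eval_nat_numeral)

definition K :: "real \<Rightarrow> real" where "K r = norm (Y 2 r)"
definition nv :: "real \<Rightarrow> real^3" where "nv r = (1 / K r) *\<^sub>R Y 2 r"
definition bv :: "real \<Rightarrow> real^3" where "bv r = cross3 (Y 1 r) (nv r)"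
definition N1 :: "real \<Rightarrow> real^3" where "N1 r = vlog (mvderiv (mnormal x) r)"
definition T :: "real \<Rightarrow> real" where "T r = inner (N1 r) (bv r)"
definition f :: "real \<Rightarrow> real" where "f r = T r / K r"

lemma Y1_eq: "vlog (mvderiv x r) = Y 1 r"
  by (simp add: vlog_def mvderiv_def Y_def Lf_def)

lemma mvd_comp: "(\<lambda>q. mvderiv x q $ i) = mderiv (\<lambda>q. x q $ i)"
  by (simp add: mvderiv_def fun_eq_iff)

lemma Y2_eq: "vlog (mvderiv (mvderiv x) r) = Y 2 r"
  by (simp add: vlog_def mvderiv_def Y_def Lf_def numeral_2_eq_2)

lemma K_eq: "mcurvature x r = exp (K r)"
  by (simp add: mcurvature_def mnorm_def Y2_eq K_def)

lemma nv_eq: "mnormal x r = (\<chi> i. exp (nv r $ i))"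
proof -
  have "mvderiv (mvderiv x) r $ i = exp (Y 2 r $ i)" for i
  proof -
    have "mvderiv (mvderiv x) r $ i > 0" by (simp add: mvderiv_def mderiv_def)
    then show ?thesis using Y2_eq[of r] by (metis exp_ln vec_lambda_beta vlog_def)
  qed
  then show ?thesis
    by (simp add: mnormal_def mvdiv_def mdiv_def K_eq nv_def vec_eq_iff)
qed

lemma vlog_nv: "vlog (mnormal x r) = nv r"
  by (simp add: nv_eq vlog_def)

lemma bv_eq: "mbinormal x r = vexp (bv r)"
  by (simp add: mbinormal_def mcross_def mtangent_def Y1_eq vlog_nv bv_def)

lemma vlog_vexp: "vlog (vexp v) = v" by (simp add: vlog_def vexp_def)

lemma T_eq: "mtorsion x r = exp (T r)"
  by (simp add: mtorsion_def minner_def bv_eq vlog_vexp T_def N1_def)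

definition sig :: "real \<Rightarrow> real" where
  "sig s = K s ^ 2 / (K s ^ 2 + T s ^ 2) powr (3/2) * (s * deriv (\<lambda>r. exp (f r)) s / exp (f s))"

lemma sig_eq: "msigma x s = exp (sig s)"
  by (simp add: msigma_def sig_def mmul_def mdiv_def mpow_def mpowr_def madd_def K_eq T_eq f_def mderiv_def
      exp_add[symmetric])

lemma Kpos: "s \<in> I \<Longrightarrow> K s > 0"
  using kp by (auto simp: K_eq mzero_def)

lemma Y1_norm: "s \<in> I \<Longrightarrow> norm (Y 1 s) = 1"
  using np by (auto simp: mnat_param_def mone_def Y1_eq mnorm_def)

lemma K_deriv:
  assumes s: "s \<in> I"
  shows "(K has_real_derivative inner (Y 2 s) (Y 3 s) / (s * K s)) (at s)"
proof -
  have Ke: "K = (\<lambda>r. sqrt (inner (Y 2 r) (Y 2 r)))"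
    by (simp add: fun_eq_iff K_def norm_eq_sqrt_inner)
  have d1: "((\<lambda>r. inner (Y 2 r) (Y 2 r)) has_real_derivative
      inner (Y 2 s) ((1/s) *\<^sub>R Y 3 s) + inner ((1/s) *\<^sub>R Y 3 s) (Y 2 s)) (at s)"
    using vd_inner[OF Y_d2[OF s] Y_d2[OF s]] by simp
  have pos: "inner (Y 2 s) (Y 2 s) > 0" using Kpos[OF s] by (simp add: K_def)
  have "(K has_real_derivative inverse (sqrt (inner (Y 2 s) (Y 2 s))) / 2 *
      (inner (Y 2 s) ((1/s) *\<^sub>R Y 3 s) + inner ((1/s) *\<^sub>R Y 3 s) (Y 2 s))) (at s)"
    unfolding Ke by (rule DERIV_chain2[OF DERIV_real_sqrt[OF pos] d1])
  moreover have "inverse (sqrt (inner (Y 2 s) (Y 2 s))) / 2 *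
      (inner (Y 2 s) ((1/s) *\<^sub>R Y 3 s) + inner ((1/s) *\<^sub>R Y 3 s) (Y 2 s))
      = inner (Y 2 s) (Y 3 s) / (s * K s)"
    using spos[OF s] by (simp add: K_def norm_eq_sqrt_inner inner_commute field_simps)
  ultimately show ?thesis by simp
qed

definition nd :: "real \<Rightarrow> real^3" where
  "nd s = (1/s) *\<^sub>R ((1/K s) *\<^sub>R Y 3 s - (inner (Y 2 s) (Y 3 s) / K s ^ 3) *\<^sub>R Y 2 s)"

lemma nv_deriv:
  assumes s: "s \<in> I"
  shows "(nv has_vector_derivative nd s) (at s)"
proof -
  have k: "K s > 0" "s > 0" using Kpos[OF s] spos[OF s] by auto
  have h1: "((\<lambda>r. 1 / K r) has_real_derivative
      - (inner (Y 2 s) (Y 3 s) / (s * K s)) / (K s)^2) (at s)"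
    using K_deriv[OF s] k by (auto intro!: derivative_eq_intros simp: power2_eq_square)
  have "(nv has_vector_derivative (1 / K s) *\<^sub>R ((1/s) *\<^sub>R Y 3 s) +
       (- (inner (Y 2 s) (Y 3 s) / (s * K s)) / (K s)^2) *\<^sub>R Y 2 s) (at s)"
    unfolding nv_def[abs_def] by (rule has_vector_derivative_scaleR[OF h1 Y_d2[OF s]])
  moreover have "(1 / K s) *\<^sub>R ((1/s) *\<^sub>R Y 3 s) +
       (- (inner (Y 2 s) (Y 3 s) / (s * K s)) / (K s)^2) *\<^sub>R Y 2 s = nd s"
    using k by (simp add: nd_def algebra_simps power2_eq_square power3_eq_cube)
  ultimately show ?thesis by simp
qed

lemma N1_eq:
  assumes s: "s \<in> I"
  shows "N1 s = s *\<^sub>R nd s"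
proof -
  have "N1 s $ i = s * nd s $ i" for i
  proof -
    have g: "(\<lambda>q. mnormal x q $ i) = (\<lambda>q. exp (nv q $ i))" by (simp add: nv_eq)
    have "((\<lambda>q. exp (nv q $ i)) has_real_derivative exp (nv s $ i) * nd s $ i) (at s)"
      using vd_comp[OF nv_deriv[OF s], of i] by (auto intro!: derivative_eq_intros)
    then have "deriv (\<lambda>q. exp (nv q $ i)) s = exp (nv s $ i) * nd s $ i"
      by (rule DERIV_imp_deriv)
    then show ?thesis
      by (simp add: N1_def vlog_def mvderiv_def g mderiv_def nv_eq)
  qed
  then show ?thesis by (simp add: vec_eq_iff)
qed

lemma T_formula:
  assumes s: "s \<in> I"
  shows "T s = inner (Y 3 s) (cross3 (Y 1 s) (Y 2 s)) / K s ^ 2"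
proof -
  have k: "K s > 0" "s > 0" using Kpos[OF s] spos[OF s] by auto
  have z: "inner (Y 2 s) (cross3 (Y 1 s) (Y 2 s)) = 0" by (simp add: dot_cross_self)
  show ?thesis using k z
    by (simp add: T_def N1_eq[OF s] bv_def nd_def nv_def cross_mult_right inner_diff_left
        power2_eq_square field_simps)
qed

lemma f_deriv_ex:
  assumes s: "s \<in> I"
  shows "(f has_real_derivative deriv f s) (at s)"
proof -
  define G where "G r = inner (Y 3 r) (cross3 (Y 1 r) (Y 2 r)) / K r ^ 3" for r
  have k: "K s > 0" using Kpos[OF s] by auto
  have dn: "((\<lambda>r. inner (Y 3 r) (cross3 (Y 1 r) (Y 2 r))) has_real_derivative
     inner (Y 3 s) (cross3 (Y 1 s) ((1/s) *\<^sub>R Y 3 s) + cross3 ((1/s) *\<^sub>R Y 2 s) (Y 2 s))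
     + inner ((1/s) *\<^sub>R Y 4 s) (cross3 (Y 1 s) (Y 2 s))) (at s)"
    using vd_inner[OF Y_d3[OF s] vd_cross[OF Y_d1[OF s] Y_d2[OF s]]]
    by (simp add: numeral_3_eq_3 numeral_2_eq_2 eval_nat_numeral)
  obtain E where dk: "((\<lambda>r. K r ^ 3) has_real_derivative E) (at s)"
    using DERIV_chain2[OF DERIV_pow K_deriv[OF s], of 3] by blast
  have "\<exists>D. (G has_real_derivative D) (at s)"
    unfolding G_def[abs_def] using DERIV_divide[OF dn dk] k by auto
  then obtain D where D: "(G has_real_derivative D) (at s)" by blast
  have "(f has_real_derivative D) (at s)"
  proof (rule has_field_derivative_transform_within_open[OF D Iopen s])
    fix r assume r: "r \<in> I"
    show "G r = f r" using T_formula[OF r] Kpos[OF r]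
      by (simp add: G_def f_def power2_eq_square power3_eq_cube)
  qed
  then show ?thesis using DERIV_imp_deriv by metis
qed

lemma tt: "s \<in> I \<Longrightarrow> inner (Y 1 s) (Y 1 s) = 1"
  using Y1_norm by (simp add: power2_norm_eq_inner[symmetric])

lemma Y2_Knv: "s \<in> I \<Longrightarrow> Y 2 s = K s *\<^sub>R nv s"
  using Kpos[of s] by (simp add: nv_def)

lemma nn: "s \<in> I \<Longrightarrow> inner (nv s) (nv s) = 1"
  using Kpos[of s] by (simp add: nv_def K_def power2_norm_eq_inner[symmetric] power2_eq_square)

lemma tn: assumes s: "s \<in> I" shows "inner (Y 1 s) (nv s) = 0"
proof -
  have "inner (Y 1 s) ((1/s) *\<^sub>R Y 2 s) + inner ((1/s) *\<^sub>R Y 2 s) (Y 1 s) = 0"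
    by (rule deriv_const_zero[OF Iopen s _ vd_inner[OF Y_d1[OF s] Y_d1[OF s]], of 1]) (use tt in blast)
  then have "inner (Y 1 s) (Y 2 s) = 0" using spos[OF s] by (simp add: inner_commute)
  then show ?thesis using Kpos[OF s] by (simp add: Y2_Knv[OF s])
qed

lemma n_nd: assumes s: "s \<in> I" shows "inner (nv s) (nd s) = 0"
proof -
  have "inner (nv s) (nd s) + inner (nd s) (nv s) = 0"
    by (rule deriv_const_zero[OF Iopen s _ vd_inner[OF nv_deriv[OF s] nv_deriv[OF s]], of 1]) (simp add: nn)
  then show ?thesis by (simp add: inner_commute)
qed

lemma t_nd: assumes s: "s \<in> I" shows "inner (Y 1 s) (nd s) = - K s / s"
proof -
  have "inner (Y 1 s) (nd s) + inner ((1/s) *\<^sub>R Y 2 s) (nv s) = 0"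
    by (rule deriv_const_zero[OF Iopen s _ vd_inner[OF Y_d1[OF s] nv_deriv[OF s]], of 0]) (use tn in blast)
  then show ?thesis using nn[OF s] by (simp add: Y2_Knv[OF s] field_simps)
qed

lemma tb: "inner (Y 1 s) (bv s) = 0" by (simp add: bv_def dot_cross_self)
lemma nb: "inner (nv s) (bv s) = 0" by (simp add: bv_def dot_cross_self)
lemma bb: assumes s: "s \<in> I" shows "inner (bv s) (bv s) = 1"
  using norm_cross_dot[of "Y 1 s" "nv s"] tn[OF s] Y1_norm[OF s] nn[OF s]
  by (simp add: bv_def power2_norm_eq_inner norm_eq_sqrt_inner)

lemma expand: "s \<in> I \<Longrightarrow> w = inner w (Y 1 s) *\<^sub>R Y 1 s + inner w (nv s) *\<^sub>R nv s + inner w (bv s) *\<^sub>R bv s"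
  using onb_expand[OF tt nn tn] unfolding bv_def by blast

lemma N1_frenet: assumes s: "s \<in> I" shows "N1 s = (- K s) *\<^sub>R Y 1 s + T s *\<^sub>R bv s"
proof -
  have "inner (N1 s) (Y 1 s) = - K s" using t_nd[OF s] spos[OF s]
    by (simp add: N1_eq[OF s] inner_commute)
  moreover have "inner (N1 s) (nv s) = 0" using n_nd[OF s] by (simp add: N1_eq[OF s] inner_commute)
  moreover have "inner (N1 s) (bv s) = T s" by (simp add: T_def)
  ultimately show ?thesis using expand[OF s, of "N1 s"] by simp
qed

lemma FT: "s \<in> I \<Longrightarrow> (Y 1 has_vector_derivative (K s / s) *\<^sub>R nv s) (at s)"
  using Y_d1[of s] by (simp add: Y2_Knv)

lemma FN: assumes s: "s \<in> I"
  shows "(nv has_vector_derivative (1/s) *\<^sub>R ((- K s) *\<^sub>R Y 1 s + T s *\<^sub>R bv s)) (at s)"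
proof -
  have "nd s = (1/s) *\<^sub>R N1 s" using spos[OF s] by (simp add: N1_eq[OF s])
  then show ?thesis using nv_deriv[OF s] N1_frenet[OF s] by simp
qed

lemma tcb: assumes s: "s \<in> I" shows "cross3 (Y 1 s) (bv s) = - nv s"
  unfolding bv_def cross_cross3 using tn[OF s] tt[OF s] by simp

lemma FB: assumes s: "s \<in> I"
  shows "(bv has_vector_derivative (- T s / s) *\<^sub>R nv s) (at s)"
proof -
  have e: "(\<lambda>r. cross3 (Y 1 r) (nv r)) = bv" by (simp add: fun_eq_iff bv_def)
  have "((\<lambda>r. cross3 (Y 1 r) (nv r)) has_vector_derivative cross3 (Y 1 s) ((1/s) *\<^sub>R ((- K s) *\<^sub>R Y 1 s + T s *\<^sub>R bv s))
      + cross3 ((K s / s) *\<^sub>R nv s) (nv s)) (at s)"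
    by (rule vd_cross[OF FT[OF s] FN[OF s]])
  moreover have "cross3 (Y 1 s) ((1/s) *\<^sub>R ((- K s) *\<^sub>R Y 1 s + T s *\<^sub>R bv s))
      + cross3 ((K s / s) *\<^sub>R nv s) (nv s) = (- T s / s) *\<^sub>R nv s"
    using tcb[OF s]
    by (simp add: cross_add_right cross_mult_right cross_mult_left Cross3.right_diff_distrib)
  ultimately show ?thesis unfolding e by simp
qed

lemma powr32: "(a::real) > 0 \<Longrightarrow> a powr (3/2) = a * sqrt a"
proof -
  assume a: "a > 0"
  have "a powr (3/2) = a powr (1 + 1/2)" by simp
  also have "\<dots> = a powr 1 * a powr (1/2)" by (rule powr_add)
  finally show ?thesis using a by (simp add: powr_half_sqrt)
qed

definition q :: "real \<Rightarrow> real" where "q r = sqrt (1 + f r ^ 2)"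

lemma qpos: "q r > 0" by (simp add: q_def add_pos_nonneg)
lemma qsq: "q r ^ 2 = 1 + f r ^ 2" by (simp add: q_def add_nonneg_nonneg)

lemma T_fK: "s \<in> I \<Longrightarrow> T s = f s * K s"
  using Kpos[of s] by (simp add: f_def)

lemma sig_simp:
  assumes s: "s \<in> I"
  shows "sig s = s * deriv f s / (K s * q s ^ 3)"
proof -
  have k: "K s > 0" using Kpos[OF s] .
  have "((\<lambda>r. exp (f r)) has_real_derivative exp (f s) * deriv f s) (at s)"
    using f_deriv_ex[OF s] by (auto intro!: derivative_eq_intros)
  then have d: "deriv (\<lambda>r. exp (f r)) s = exp (f s) * deriv f s" by (rule DERIV_imp_deriv)
  have e1: "K s ^ 2 + T s ^ 2 = K s ^ 2 * q s ^ 2" using T_fK[OF s] qsq[of s]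
    by (simp add: algebra_simps power2_eq_square)
  have "sqrt ((K s * q s) ^ 2) = K s * q s" using k qpos[of s] by simp
  then have e2: "sqrt (K s ^ 2 * q s ^ 2) = K s * q s" by (simp add: power_mult_distrib)
  have "(K s ^ 2 + T s ^ 2) powr (3/2) = K s ^ 3 * q s ^ 3"
  proof -
    have "K s ^ 2 * q s ^ 2 > 0" using k qpos[of s] by simp
    then have "(K s ^ 2 * q s ^ 2) powr (3/2) = K s ^ 2 * q s ^ 2 * (K s * q s)"
      by (simp add: powr32 e2)
    then show ?thesis unfolding e1 by (simp add: power2_eq_square power3_eq_cube)
  qed
  then show ?thesis using k qpos[of s]
    by (simp add: sig_def d power2_eq_square power3_eq_cube field_simps)
qed

lemma q_deriv:
  assumes s: "s \<in> I"
  shows "(q has_real_derivative f s * deriv f s / q s) (at s)"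
proof -
  have p: "1 + f s ^ 2 > 0" by (simp add: add_pos_nonneg)
  have d1: "((\<lambda>r. 1 + f r ^ 2) has_real_derivative 2 * f s * deriv f s) (at s)"
    using f_deriv_ex[OF s] by (auto intro!: derivative_eq_intros)
  have "(q has_real_derivative inverse (sqrt (1 + f s ^ 2)) / 2 * (2 * f s * deriv f s)) (at s)"
    unfolding q_def[abs_def] by (rule DERIV_chain2[OF DERIV_real_sqrt[OF p] d1])
  then show ?thesis by (simp add: q_def field_simps)
qed

definition Vf :: "real \<Rightarrow> real \<Rightarrow> real^3" where
  "Vf c r = (1 / sqrt (1 + c^2)) *\<^sub>R (c *\<^sub>R nv r + (1 / q r) *\<^sub>R (f r *\<^sub>R Y 1 r + bv r))"

lemma Vf_deriv:
  assumes s: "s \<in> I" and sc: "sig s = c"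
  shows "(Vf c has_vector_derivative 0) (at s)"
proof (rule vec3_vd)
  fix i
  have k: "K s > 0" "s > 0" using Kpos[OF s] spos[OF s] by auto
  have qp: "q s > 0" by (rule qpos)
  have fd: "deriv f s = c * K s * q s ^ 3 / s" using sig_simp[OF s] sc k qp by (simp add: field_simps)
  have cpos: "1 + c * c > 0" by (simp add: add_pos_nonneg)
  have c2: "1 + c^2 \<noteq> 0" using cpos by (simp add: power2_eq_square)
  have ct: "((\<lambda>r. Y (Suc 0) r $ i) has_real_derivative K s / s * nv s $ i) (at s)"
    using vd_comp[OF FT[OF s], of i] by simp
  have cn: "((\<lambda>r. nv r $ i) has_real_derivative (1/s) * (- K s * Y (Suc 0) s $ i + T s * bv s $ i)) (at s)"
    using vd_comp[OF FN[OF s], of i] by simp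
  have cb: "((\<lambda>r. bv r $ i) has_real_derivative - T s / s * nv s $ i) (at s)"
    using vd_comp[OF FB[OF s], of i] by simp
  have tf: "T s = f s * K s" by (rule T_fK[OF s])
  have q2: "q s * q s = 1 + f s * f s" using qsq[of s] by (simp add: power2_eq_square)
  show "((\<lambda>r. Vf c r $ i) has_real_derivative 0 $ i) (at s)"
    unfolding Vf_def using k qp cpos c2
    apply (auto intro!: derivative_eq_intros ct cn cb q_deriv[OF s] f_deriv_ex[OF s])
  proof -
    have "(T s * bv s $ i - K s * Y (Suc 0) s $ i) * c / s +
        ((deriv f s * Y (Suc 0) s $ i + K s * nv s $ i * f s / s - T s * nv s $ i / s) * q s -
         (f s * Y (Suc 0) s $ i + bv s $ i) * (f s * deriv f s) / q s) / (q s * q s)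
        = (c * K s / s) * (q s * q s - 1 - f s * f s) * Y (Suc 0) s $ i"
      unfolding fd tf using k qp by (simp add: field_simps power3_eq_cube)
    also have "\<dots> = 0" using q2 by simp
    finally show "(T s * bv s $ i - K s * Y (Suc 0) s $ i) * c / s +
        ((deriv f s * Y (Suc 0) s $ i + K s * nv s $ i * f s / s - T s * nv s $ i / s) * q s -
         (f s * Y (Suc 0) s $ i + bv s $ i) * (f s * deriv f s) / q s) / (q s * q s) = 0" .
  qed
qed

lemma orth_all:
  assumes s: "s \<in> I"
  shows "inner (Y 1 s) (Y 1 s) = 1" "inner (nv s) (nv s) = 1" "inner (bv s) (bv s) = 1"
    "inner (Y 1 s) (nv s) = 0" "inner (nv s) (Y 1 s) = 0" "inner (Y 1 s) (bv s) = 0"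
    "inner (bv s) (Y 1 s) = 0" "inner (nv s) (bv s) = 0" "inner (bv s) (nv s) = 0"
  using tt[OF s] nn[OF s] bb[OF s] tn[OF s] tb[of s] nb[of s] by (auto simp: inner_commute)

lemma Vf_props:
  assumes s: "s \<in> I"
  shows "inner (nv s) (Vf c s) = c / sqrt (1 + c^2)" "inner (Vf c s) (Vf c s) = 1"
proof -
  note o = orth_all[OF s, simplified]
  show "inner (nv s) (Vf c s) = c / sqrt (1 + c^2)"
    by (simp add: Vf_def inner_add_right inner_add_left o)
  have cp: "1 + c^2 > 0" by (simp add: add_pos_nonneg)
  have "inner (Vf c s) (Vf c s) = (1 / sqrt (1 + c^2))^2 * (c^2 + (1 / q s)^2 * (f s ^ 2 + 1))"
  proof -
    have nz: "q s * q s + c * (c * (q s * q s)) \<noteq> 0" "1 + c * c \<noteq> 0" "q s \<noteq> 0"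
      using cp qpos[of s] by (auto simp: power2_eq_square) (metis add_pos_pos mult_pos_pos zero_less_mult_iff not_square_less_zero distrib_right mult_1 mult.assoc less_irrefl)
    show ?thesis
      by (simp add: Vf_def inner_add_right inner_add_left o power2_eq_square algebra_simps)
        (simp add: field_simps nz)
  qed
  also have "(1 / q s)^2 * (f s ^ 2 + 1) = 1"
  proof -
    have "1 + f s^2 > 0" by (simp add: add_pos_nonneg)
    then show ?thesis using qsq[of s] qpos[of s] by (simp add: power_divide add.commute)
  qed
  also have "(1 / sqrt (1 + c^2))^2 = 1 / (1 + c^2)" using cp by (simp add: power_divide)
  also have "1 / (1 + c^2) * (c^2 + 1) = 1" using cp by simp
  finally show "inner (Vf c s) (Vf c s) = 1" .
qed

lemma helix_dir:
  assumes sc: "\<forall>s\<in>I. sig s = c" and s0: "s0 \<in> I"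
  shows "norm (Vf c s0) = 1 \<and> (\<forall>s\<in>I. inner (nv s) (Vf c s0) = c / sqrt (1 + c^2))"
proof -
  have cv: "convex I" using Iint is_interval_convex_1 by blast
  obtain C where C: "\<And>r. r \<in> I \<Longrightarrow> Vf c r = C"
    using has_vector_derivative_zero_constant[OF cv, of "Vf c"]
      Vf_deriv sc has_vector_derivative_at_within by metis
  have "norm (Vf c s0) = 1" using Vf_props(2)[OF s0] by (simp add: norm_eq_sqrt_inner)
  moreover have "inner (nv s) (Vf c s0) = c / sqrt (1 + c^2)" if s: "s \<in> I" for s
    using Vf_props(1)[OF s, of c] C[OF s] C[OF s0] by simp
  ultimately show ?thesis by blast
qed

lemma helix_point:
  assumes V: "inner V V = 1" and a: "\<forall>r\<in>I. inner (nv r) V = a" and s: "s \<in> I"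
  shows "((\<lambda>r. inner (bv r) V) has_real_derivative - T s / s * a) (at s)"
    "(inner (bv s) V * q s)^2 = 1 - a^2" "inner (bv s) V * q s \<noteq> 0"
    "sig s = a / (inner (bv s) V * q s)"
proof -
  have k: "K s > 0" "s > 0" using Kpos[OF s] spos[OF s] by auto
  note o = orth_all[OF s]
  have ab: "inner (Y 1 r) V = f r * inner (bv r) V" if r: "r \<in> I" for r
  proof -
    have kr: "K r > 0" "r > 0" using Kpos[OF r] spos[OF r] by auto
    have "inner (nv r) 0 + inner ((1/r) *\<^sub>R ((- K r) *\<^sub>R Y 1 r + T r *\<^sub>R bv r)) V = 0"
      by (rule deriv_const_zero[OF Iopen r _ vd_inner[OF FN[OF r] has_vector_derivative_const], where c=a])
        (use a in blast)
    then have "K r * inner (Y 1 r) V = T r * inner (bv r) V" using kr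
      by (simp add: inner_add_left inner_diff_left field_simps)
    then show ?thesis using kr T_fK[OF r] by simp
  qed
  have da: "((\<lambda>r. inner (Y 1 r) V) has_real_derivative K s / s * a) (at s)"
    using vd_inner[OF FT[OF s] has_vector_derivative_const, of V] a s by simp
  show db: "((\<lambda>r. inner (bv r) V) has_real_derivative - T s / s * a) (at s)"
    using vd_inner[OF FB[OF s] has_vector_derivative_const, of V] a s by simp
  have d1: "((\<lambda>r. f r * inner (bv r) V) has_real_derivative K s / s * a) (at s)"
    by (rule has_field_derivative_transform_within_open[OF da Iopen s]) (use ab in blast)
  have d2: "((\<lambda>r. f r * inner (bv r) V) has_real_derivative
      f s * (- T s / s * a) + deriv f s * inner (bv s) V) (at s)"
    using DERIV_mult[OF f_deriv_ex[OF s] db] by (simp add: algebra_simps)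
  have E1: "K s / s * a = f s * (- T s / s * a) + deriv f s * inner (bv s) V"
    using DERIV_unique[OF d1 d2] .
  define \<beta> where "\<beta> = inner (bv s) V"
  have E2: "s * deriv f s * \<beta> = K s * a * (1 + f s ^ 2)"
    using E1 k unfolding T_fK[OF s] \<beta>_def[symmetric] by (simp add: field_simps power2_eq_square)
  have "1 = inner V (inner V (Y 1 s) *\<^sub>R Y 1 s + inner V (nv s) *\<^sub>R nv s + inner V (bv s) *\<^sub>R bv s)"
    using V expand[OF s, of V] by simp
  also have "\<dots> = (f s * \<beta>)^2 + a^2 + \<beta>^2"
    using ab[OF s] a s unfolding \<beta>_def by (simp add: inner_add_right inner_commute power2_eq_square)
  finally have N: "1 = (f s * \<beta>)^2 + a^2 + \<beta>^2" .
  show sq: "(inner (bv s) V * q s)^2 = 1 - a^2"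
    using N qsq[of s] unfolding \<beta>_def[symmetric] by (simp add: power_mult_distrib algebra_simps)
  show nz: "inner (bv s) V * q s \<noteq> 0"
  proof
    assume "inner (bv s) V * q s = 0"
    then have b0: "\<beta> = 0" using qpos[of s] by (simp add: \<beta>_def)
    then have "K s * a * (1 + f s ^ 2) = 0" using E2 by simp
    moreover have "1 + f s ^ 2 > 0" by (simp add: add_pos_nonneg)
    ultimately have "a = 0" using k by simp
    then show False using N b0 by simp
  qed
  show "sig s = a / (inner (bv s) V * q s)"
  proof -
    have bq: "\<beta> * q s \<noteq> 0" using nz by (simp add: \<beta>_def)
    have "sig s * (\<beta> * q s) = s * deriv f s * \<beta> / (K s * q s ^ 2)"
      using k qpos[of s] by (simp add: sig_simp[OF s] power2_eq_square power3_eq_cube field_simps)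
    also have "\<dots> = a"
    proof -
      have p: "1 + f s ^ 2 > 0" by (simp add: add_pos_nonneg)
      have "s * deriv f s * \<beta> / (K s * q s ^ 2) = K s * a * (1 + f s ^ 2) / (K s * (1 + f s ^ 2))"
        unfolding E2 qsq ..
      also have "\<dots> = a" using p k by simp
      finally show ?thesis .
    qed
    finally show ?thesis using bq by (simp add: \<beta>_def field_simps)
  qed
qed

lemma sig_of_helix:
  assumes V: "inner V V = 1" and a: "\<forall>r\<in>I. inner (nv r) V = a"
  shows "\<exists>c. \<forall>s\<in>I. sig s = c"
proof (cases "I = {}")
  case True then show ?thesis by auto
next
  case False
  then obtain s0 where s0: "s0 \<in> I" by auto
  define g where "g r = inner (bv r) V * q r" for r
  have cont: "continuous_on I g"
  proof (rule continuous_at_imp_continuous_on, rule ballI)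
    fix s assume s: "s \<in> I"
    have "isCont (\<lambda>r. inner (bv r) V) s" using DERIV_isCont helix_point(1)[OF V a s] by blast
    moreover have "isCont q s" using DERIV_isCont q_deriv[OF s] by blast
    ultimately show "isCont g s" unfolding g_def[abs_def] by (rule isCont_mult)
  qed
  have pos: "1 - a^2 > 0"
    using helix_point(2,3)[OF V a s0] by (metis g_def not_real_square_gt_zero power2_eq_square)
  obtain C where C: "\<And>s. s \<in> I \<Longrightarrow> g s = C"
    using sq_const[OF cont Iint _ pos] helix_point(2)[OF V a] unfolding g_def by blast
  have "\<forall>s\<in>I. sig s = a / C" using helix_point(4)[OF V a] C unfolding g_def by auto
  then show ?thesis by blast
qed

end

theorem theorem4p14:
  fixes x :: "real \<Rightarrow> real^3" and I :: "real set"
  assumes "is_interval I" and "open I" and "I \<subseteq> {0<..}"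
    and "\<forall>s\<in>I. \<forall>i. x s $ i > 0"
    and "msmooth_on I x"
    and "mnat_param I x"
    and "\<forall>s\<in>I. mcurvature x s > mzero"
  shows "mslant_helix I x \<longleftrightarrow> (\<exists>c. \<forall>s\<in>I. msigma x s = c)"
proof
  assume "mslant_helix I x"
  then obtain v c0 where v: "mnorm v = mone" and c0: "\<forall>s\<in>I. minner (mnormal x s) v = c0"
    unfolding mslant_helix_def by blast
  define V where "V = vlog v"
  have "norm V = 1" using v by (simp add: mnorm_def mone_def V_def)
  then have VV: "inner V V = 1" by (simp add: power2_norm_eq_inner[symmetric])
  have a: "\<forall>r\<in>I. inner (nv x r) V = ln c0"
  proof
    fix r assume r: "r \<in> I"
    have "exp (inner (nv x r) V) = c0" using c0 r by (simp add: minner_def vlog_nv[OF assms] V_def)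
    then show "inner (nv x r) V = ln c0" by (metis ln_exp)
  qed
  obtain c where "\<forall>s\<in>I. sig x s = c" using sig_of_helix[OF assms VV a] by blast
  then have "\<forall>s\<in>I. msigma x s = exp c" by (simp add: sig_eq[OF assms])
  then show "\<exists>c. \<forall>s\<in>I. msigma x s = c" by blast
next
  assume "\<exists>c. \<forall>s\<in>I. msigma x s = c"
  then obtain c1 where c1: "\<forall>s\<in>I. msigma x s = c1" by blast
  have sc: "\<forall>s\<in>I. sig x s = ln c1"
  proof
    fix s assume s: "s \<in> I"
    have "exp (sig x s) = c1" using c1 s sig_eq[OF assms] by metis
    then show "sig x s = ln c1" by (metis ln_exp)
  qed
  have kn: "\<forall>s\<in>I. mcurvature x s \<noteq> mzero" using assms(7) by (metis less_irrefl)
  show "mslant_helix I x"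
  proof (cases "I = {}")
    case True
    have "mnorm (vexp (axis 1 1)) = mone" by (simp add: mnorm_def mone_def vlog_vexp0)
    then show ?thesis unfolding mslant_helix_def using True by blast
  next
    case False
    then obtain s0 where s0: "s0 \<in> I" by auto
    define V where "V = Vf x (ln c1) s0"
    have h: "norm V = 1" "\<forall>s\<in>I. inner (nv x s) V = ln c1 / sqrt (1 + (ln c1)^2)"
      using helix_dir[OF assms sc s0] unfolding V_def by auto
    have "mnorm (vexp V) = mone" using h(1) by (simp add: mnorm_def mone_def vlog_vexp0)
    moreover have "\<forall>s\<in>I. minner (mnormal x s) (vexp V) = exp (ln c1 / sqrt (1 + (ln c1)^2))"
      using h(2) by (simp add: minner_def vlog_vexp0 vlog_nv[OF assms])
    ultimately show ?thesis unfolding mslant_helix_def using kn by blast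
  qed
qed
end
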